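(* Let $R$ be a finite local Frobenius ring which is not a field, with fixed primitive additive character $\psi$, and let $\tau$ be a non-primitive multiplicative character of $R$. Then: (i) $K_\tau(a)=0$ for every $a\in R\setminus R^\times$; (ii) if $R$ has odd characteristic, then moreover $K_\tau(a)=0$ for every $a\in R$ with $a\notin (R^\times)^2$ (the set of squares of units).
   Context: All rings are finite and commutative with identity; $R^\times$ is the unit group; $M$ is the maximal ideal of the local ring $R$. An additive character $(R,+)\to\mathbb{C}^*$ is primitive if the only ideal on which it is identically $1$ is $(0)$; $R$ is Frobenius if such a character exists. A multiplicative character is a homomorphism $R^\times\to\mathbb{C}^*$. Its conductor is: $R$ if the character is trivial; otherwise the largest ideal $I\subseteq M$ such that the character is identically $1$ on the subgroup $1+I$. A multiplicative character is primitive if its conductor is $(0)$. The twisted Kloosterman sum is $K_\tau(a)=\sum_{u\in R^\times}\tau(u)\psi(u+au^{-1})$. "Odd characteristic" for a local ring means the residue field $R/M$ has odd characteristic. *)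

theory Defs
  imports Complex_Main
begin

text \<open>Ideals of a commutative ring (type-class idiom; the ring is the whole type).\<close>
definition is_ideal :: "'a::comm_ring_1 set \<Rightarrow> bool" where
  "is_ideal I \<longleftrightarrow> 0 \<in> I \<and> (\<forall>x\<in>I. \<forall>y\<in>I. x + y \<in> I) \<and> (\<forall>r. \<forall>x\<in>I. r * x \<in> I)"

definition is_maximal_ideal :: "'a::comm_ring_1 set \<Rightarrow> bool" where
  "is_maximal_ideal M \<longleftrightarrow> is_ideal M \<and> M \<noteq> UNIV \<and>
     (\<forall>J. is_ideal J \<and> M \<subseteq> J \<longrightarrow> J = M \<or> J = UNIV)"

definition local_ring :: "'a::comm_ring_1 itself \<Rightarrow> bool" where
  "local_ring _ \<longleftrightarrow> (\<exists>!M::'a set. is_maximal_ideal M)"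

definition max_ideal :: "'a::comm_ring_1 set" where
  "max_ideal = (THE M. is_maximal_ideal M)"

definition is_field_ring :: "'a::comm_ring_1 itself \<Rightarrow> bool" where
  "is_field_ring _ \<longleftrightarrow> (0::'a) \<noteq> 1 \<and> (\<forall>x::'a. x \<noteq> 0 \<longrightarrow> x dvd 1)"

definition units :: "'a::comm_ring_1 set" where
  "units = {u. u dvd 1}"

definition unit_inv :: "'a::comm_ring_1 \<Rightarrow> 'a" where
  "unit_inv u = (THE v. u * v = 1)"

definition add_char :: "('a::comm_ring_1 \<Rightarrow> complex) \<Rightarrow> bool" where
  "add_char psi \<longleftrightarrow> (\<forall>x y. psi (x + y) = psi x * psi y) \<and> (\<forall>x. psi x \<noteq> 0)"

definition primitive_add_char :: "('a::comm_ring_1 \<Rightarrow> complex) \<Rightarrow> bool" where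
  "primitive_add_char psi \<longleftrightarrow> add_char psi \<and>
     (\<forall>I. is_ideal I \<and> (\<forall>x\<in>I. psi x = 1) \<longrightarrow> I = {0})"

text \<open>Multiplicative character R^\<times> \<rightarrow> C^* (only its values on units matter).\<close>
definition mult_char :: "('a::comm_ring_1 \<Rightarrow> complex) \<Rightarrow> bool" where
  "mult_char tau \<longleftrightarrow> (\<forall>u\<in>units. \<forall>v\<in>units. tau (u * v) = tau u * tau v) \<and>
     (\<forall>u\<in>units. tau u \<noteq> 0)"

definition trivial_mult_char :: "('a::comm_ring_1 \<Rightarrow> complex) \<Rightarrow> bool" where
  "trivial_mult_char tau \<longleftrightarrow> (\<forall>u\<in>units. tau u = 1)"

definition conductor :: "('a::comm_ring_1 \<Rightarrow> complex) \<Rightarrow> 'a set" where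
  "conductor tau = (if trivial_mult_char tau then UNIV
     else (GREATEST I. is_ideal I \<and> I \<subseteq> max_ideal \<and> (\<forall>x\<in>I. tau (1 + x) = 1)))"

definition primitive_mult_char :: "('a::comm_ring_1 \<Rightarrow> complex) \<Rightarrow> bool" where
  "primitive_mult_char tau \<longleftrightarrow> conductor tau = {0}"

definition kloosterman :: "('a::comm_ring_1 \<Rightarrow> complex) \<Rightarrow> ('a \<Rightarrow> complex) \<Rightarrow> 'a \<Rightarrow> complex" where
  "kloosterman psi tau a = (\<Sum>u\<in>units. tau u * psi (u + a * unit_inv u))"

text \<open>Characteristic of the residue field R/M: least n > 0 with n\<cdot>1 \<in> M.\<close>
definition residue_char :: "'a::comm_ring_1 itself \<Rightarrow> nat" where
  "residue_char _ = (LEAST n. n > 0 \<and> (of_nat n :: 'a) \<in> max_ideal)"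

definition unit_squares :: "'a::comm_ring_1 set" where
  "unit_squares = {u * u | u. u \<in> units}"

end

theory Submission
  imports Defs
begin


lemma unit_inv_eq:
  fixes u v :: "'a::comm_ring_1"
  assumes "u * v = 1" shows "unit_inv u = v"
  unfolding unit_inv_def
proof (rule the_equality)
  show "u * v = 1" by fact
  fix w assume "u * w = 1"
  then have "w = w * (u * v)" using assms by simp
  also have "\<dots> = (u * w) * v" by (simp add: algebra_simps)
  finally show "w = v" using \<open>u * w = 1\<close> by simp
qed

lemma unit_inv_mult:
  fixes u :: "'a::comm_ring_1"
  assumes "u \<in> units" shows "u * unit_inv u = 1"
proof -
  from assms obtain v where "1 = u * v" unfolding units_def by (auto elim: dvdE)
  then show ?thesis using unit_inv_eq[of u v] by simp
qed

lemma unit_inv_units: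
  fixes u :: "'a::comm_ring_1"
  assumes "u \<in> units" shows "unit_inv u \<in> units"
proof -
  have "1 = unit_inv u * u" using unit_inv_mult[OF assms] by (simp add: mult.commute)
  then have "unit_inv u dvd 1" by (rule dvdI)
  then show ?thesis unfolding units_def by simp
qed

lemma units_mult:
  fixes u v :: "'a::comm_ring_1"
  shows "u \<in> units \<Longrightarrow> v \<in> units \<Longrightarrow> u * v \<in> units"
  unfolding units_def using mult_dvd_mono[of u 1 v 1] by simp

lemma units_multD:
  fixes u v :: "'a::comm_ring_1"
  shows "u * v \<in> units \<Longrightarrow> u \<in> units"
  unfolding units_def mem_Collect_eq by (rule dvd_mult_left)

lemma one_units: "(1::'a::comm_ring_1) \<in> units"
  unfolding units_def by simp

lemma ideal_mult: "is_ideal I \<Longrightarrow> x \<in> I \<Longrightarrow> r * x \<in> I"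
  unfolding is_ideal_def by blast

lemma ideal_add: "is_ideal I \<Longrightarrow> x \<in> I \<Longrightarrow> y \<in> I \<Longrightarrow> x + y \<in> I"
  unfolding is_ideal_def by blast

lemma ideal_zero: "is_ideal I \<Longrightarrow> 0 \<in> I"
  unfolding is_ideal_def by blast

lemma ideal_uminus: "is_ideal I \<Longrightarrow> x \<in> I \<Longrightarrow> - x \<in> I"
  using ideal_mult[of I x "-1"] by simp

lemma ideal_diff: "is_ideal I \<Longrightarrow> x \<in> I \<Longrightarrow> y \<in> I \<Longrightarrow> x - y \<in> I"
  using ideal_add[of I x "-y"] ideal_uminus[of I y] by simp

lemma max_ideal_ok:
  assumes "local_ring TYPE('a::comm_ring_1)"
  shows "is_maximal_ideal (max_ideal::'a set)"
  using assms unfolding local_ring_def max_ideal_def by (rule theI')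

lemma max_ideal_unique:
  assumes "local_ring TYPE('a::comm_ring_1)" "is_maximal_ideal (J::'a set)"
  shows "J = max_ideal"
  using assms max_ideal_ok[OF assms(1)] unfolding local_ring_def by blast

lemma unit_notin_max:
  assumes "local_ring TYPE('a::comm_ring_1)" "(x::'a) \<in> units"
  shows "x \<notin> max_ideal"
proof
  assume "x \<in> max_ideal"
  have M: "is_maximal_ideal (max_ideal::'a set)" by (rule max_ideal_ok[OF assms(1)])
  then have I: "is_ideal (max_ideal::'a set)" unfolding is_maximal_ideal_def by blast
  have "\<forall>r::'a. r \<in> max_ideal"
  proof
    fix r :: 'a
    have "(r * unit_inv x) * x \<in> max_ideal" by (rule ideal_mult[OF I \<open>x \<in> max_ideal\<close>])
    moreover have "(r * unit_inv x) * x = r" using unit_inv_mult[OF assms(2)]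
      by (simp add: algebra_simps)
    ultimately show "r \<in> max_ideal" by simp
  qed
  then show False using M unfolding is_maximal_ideal_def by blast
qed

lemma nonunit_in_max:
  assumes "local_ring TYPE('a::{comm_ring_1,finite})" "(x::'a) \<notin> units"
  shows "x \<in> max_ideal"
proof -
  define J0 where "J0 = range (\<lambda>r::'a. r * x)"
  define S where "S = {J::'a set. is_ideal J \<and> J \<noteq> UNIV \<and> J0 \<subseteq> J}"
  have J0I: "is_ideal J0" unfolding J0_def is_ideal_def
  proof (intro conjI ballI allI)
    show "0 \<in> range (\<lambda>r. r * x)" by (rule range_eqI[where x=0]) simp
    fix y z assume "y \<in> range (\<lambda>r. r * x)" "z \<in> range (\<lambda>r. r * x)"
    then obtain r s where "y = r * x" "z = s * x" by blast
    then have "y + z = (r + s) * x" by (simp add: distrib_right)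
    then show "y + z \<in> range (\<lambda>r. r * x)" by blast
  next
    fix t y assume "y \<in> range (\<lambda>r. r * x)"
    then obtain r where "y = r * x" by blast
    then have "t * y = (t * r) * x" by (simp add: mult.assoc)
    then show "t * y \<in> range (\<lambda>r. r * x)" by blast
  qed
  have "1 \<notin> J0"
  proof
    assume "1 \<in> J0"
    then obtain r where "1 = r * x" unfolding J0_def by blast
    then have "1 = x * r" by (simp add: mult.commute)
    then have "x dvd 1" by (rule dvdI)
    then show False using assms(2) unfolding units_def by simp
  qed
  then have "J0 \<noteq> UNIV" by blast
  then have "J0 \<in> S" using J0I unfolding S_def by blast
  have fS: "finite S" by simp
  have "\<exists>J. J \<in> S \<and> (\<forall>J'. J' \<in> S \<longrightarrow> card J' \<le> card J)"
    using ex_has_greatest_nat[of "\<lambda>J. J \<in> S" J0 card "card (UNIV::'a set) + 1"] \<open>J0 \<in> S\<close>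
    by (simp add: card_mono less_Suc_eq_le)
  then obtain J where JS: "J \<in> S" and Jmax: "\<forall>J'\<in>S. card J' \<le> card J" by blast
  have "is_maximal_ideal J"
    unfolding is_maximal_ideal_def
  proof (intro conjI allI impI)
    show "is_ideal J" "J \<noteq> UNIV" using JS unfolding S_def by auto
    fix J' assume "is_ideal J' \<and> J \<subseteq> J'"
    then show "J' = J \<or> J' = UNIV"
    proof (cases "J' = UNIV")
      case False
      then have "J' \<in> S" using JS \<open>is_ideal J' \<and> J \<subseteq> J'\<close> unfolding S_def by blast
      then have "card J' \<le> card J" using Jmax by blast
      moreover have "card J \<le> card J'" using \<open>is_ideal J' \<and> J \<subseteq> J'\<close> by (simp add: card_mono)
      ultimately have "card J = card J'" by simp
      then have "J = J'" using \<open>is_ideal J' \<and> J \<subseteq> J'\<close> card_subset_eq[of J' J] finite[of J'] by blast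
      then show ?thesis by simp
    qed simp
  qed
  then have "J = max_ideal" using max_ideal_unique[OF assms(1)] by blast
  moreover have "x \<in> J0" unfolding J0_def by (rule range_eqI[where x=1]) simp
  ultimately show ?thesis using JS unfolding S_def by blast
qed

lemma units_iff_max:
  assumes "local_ring TYPE('a::{comm_ring_1,finite})"
  shows "((x::'a) \<in> units) = (x \<notin> max_ideal)"
  using unit_notin_max[OF assms] nonunit_in_max[OF assms] by blast

lemma max_ideal_is_ideal:
  assumes "local_ring TYPE('a::comm_ring_1)"
  shows "is_ideal (max_ideal::'a set)"
  using max_ideal_ok[OF assms] unfolding is_maximal_ideal_def by blast

lemma unit_plus_max:
  assumes "local_ring TYPE('a::{comm_ring_1,finite})" "(u::'a) \<in> units" "m \<in> max_ideal"
  shows "u + m \<in> units"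
proof (rule ccontr)
  assume "u + m \<notin> units"
  then have "u + m \<in> max_ideal" using nonunit_in_max[OF assms(1)] by blast
  then have "(u + m) - m \<in> max_ideal" using ideal_diff[OF max_ideal_is_ideal[OF assms(1)]] assms(3) by blast
  then show False using unit_notin_max[OF assms(1,2)] by simp
qed




lemma tau_one: "mult_char tau \<Longrightarrow> tau (1::'a::comm_ring_1) = 1"
proof -
  assume h: "mult_char tau"
  have "tau (1 * 1::'a) = tau 1 * tau 1" using h one_units unfolding mult_char_def by blast
  moreover have "tau (1::'a) \<noteq> 0" using h one_units unfolding mult_char_def by blast
  ultimately show ?thesis by simp
qed

lemma psi_zero: "add_char psi \<Longrightarrow> psi (0::'a::comm_ring_1) = 1"
proof -
  assume h: "add_char psi"
  have "psi (0 + 0::'a) = psi 0 * psi 0" using h unfolding add_char_def by blast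
  moreover have "psi (0::'a) \<noteq> 0" using h unfolding add_char_def by blast
  ultimately show ?thesis by simp
qed

lemma bij_units_mult:
  fixes c :: "'a::comm_ring_1"
  assumes "c \<in> units" shows "bij_betw (\<lambda>u. u * c) units units"
proof (rule bij_betw_byWitness[where f'="\<lambda>u. u * unit_inv c"])
  have cc: "c * unit_inv c = 1" by (rule unit_inv_mult[OF assms])
  show "\<forall>a\<in>units. a * c * unit_inv c = a" using cc by (simp add: mult.assoc)
  show "\<forall>a\<in>units. a * unit_inv c * c = a" using cc by (simp add: mult.assoc mult.commute[of "unit_inv c" c])
  show "(\<lambda>u. u * c) ` units \<subseteq> units" using units_mult assms by blast
  show "(\<lambda>u. u * unit_inv c) ` units \<subseteq> units" using units_mult unit_inv_units assms by blast
qed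

lemma bij_ideal_mult:
  fixes c :: "'a::comm_ring_1"
  assumes "is_ideal I" "c \<in> units" shows "bij_betw (\<lambda>x. c * x) I I"
proof (rule bij_betw_byWitness[where f'="\<lambda>x. unit_inv c * x"])
  have cc: "c * unit_inv c = 1" by (rule unit_inv_mult[OF assms(2)])
  have cc': "unit_inv c * c = 1" using cc by (simp add: mult.commute)
  show "\<forall>a\<in>I. unit_inv c * (c * a) = a" using cc' by (simp add: mult.assoc[symmetric])
  show "\<forall>a\<in>I. c * (unit_inv c * a) = a" using cc by (simp add: mult.assoc[symmetric])
  show "(\<lambda>x. c * x) ` I \<subseteq> I" using ideal_mult[OF assms(1)] by blast
  show "(\<lambda>x. unit_inv c * x) ` I \<subseteq> I" using ideal_mult[OF assms(1)] by blast
qed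

lemma bij_ideal_add:
  fixes y0 :: "'a::comm_ring_1"
  assumes "is_ideal I" "y0 \<in> I" shows "bij_betw (\<lambda>y. y0 + y) I I"
proof (rule bij_betw_byWitness[where f'="\<lambda>y. y - y0"])
  show "\<forall>a\<in>I. y0 + a - y0 = a" by simp
  show "\<forall>a\<in>I. y0 + (a - y0) = a" by simp
  show "(\<lambda>y. y0 + y) ` I \<subseteq> I" using ideal_add[OF assms(1) assms(2)] by blast
  show "(\<lambda>y. y - y0) ` I \<subseteq> I" using ideal_diff[OF assms(1) _ assms(2)] by blast
qed

lemma char_sum_zero:
  fixes psi :: "'a::{comm_ring_1,finite} \<Rightarrow> complex"
  assumes "add_char psi" "is_ideal I" "y0 \<in> I" "psi y0 \<noteq> 1"
  shows "(\<Sum>y\<in>I. psi y) = 0"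
proof -
  have "(\<Sum>y\<in>I. psi y) = (\<Sum>y\<in>I. psi (y0 + y))"
    using sum.reindex_bij_betw[OF bij_ideal_add[OF assms(2,3)], of psi] by simp
  also have "\<dots> = (\<Sum>y\<in>I. psi y0 * psi y)"
    using assms(1) unfolding add_char_def by simp
  also have "\<dots> = psi y0 * (\<Sum>y\<in>I. psi y)" by (simp add: sum_distrib_left)
  finally have "(psi y0 - 1) * (\<Sum>y\<in>I. psi y) = 0" by (simp add: algebra_simps)
  then show ?thesis using assms(4) by simp
qed

lemma core:
  fixes psi tau :: "'a::{comm_ring_1,finite} \<Rightarrow> complex" and a :: 'a
  assumes loc: "local_ring TYPE('a)"
    and I: "is_ideal I" "I \<subseteq> max_ideal" "I \<noteq> {0}"
    and ann: "\<forall>x\<in>I. \<forall>m\<in>max_ideal. x * m = 0"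
    and tauI: "\<forall>x\<in>I. tau (1 + x) = 1"
    and psi: "primitive_add_char psi"
    and tau: "mult_char tau"
    and b: "\<forall>u\<in>units. u - a * unit_inv u \<in> units"
  shows "kloosterman psi tau a = 0"
proof -
  define f where "f = (\<lambda>w. tau w * psi (w + a * unit_inv w))"
  have K: "kloosterman psi tau a = sum f units" unfolding kloosterman_def f_def by simp
  have addc: "add_char psi" using psi unfolding primitive_add_char_def by blast
  obtain y0 where y0: "y0 \<in> I" "psi y0 \<noteq> 1"
    using psi I(1,3) unfolding primitive_add_char_def by blast
  have sumI: "(\<Sum>x\<in>I. psi (c * x)) = 0" if c: "c \<in> units" for c
  proof -
    have "(\<Sum>x\<in>I. psi (c * x)) = (\<Sum>x\<in>I. psi x)"
      using sum.reindex_bij_betw[OF bij_ideal_mult[OF I(1) c], of psi] by simp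
    also have "\<dots> = 0" by (rule char_sum_zero[OF addc I(1) y0])
    finally show ?thesis .
  qed
  have inner: "(\<Sum>x\<in>I. f (u * (1 + x))) = 0" if u: "u \<in> units" for u
  proof -
    have eq: "f (u * (1 + x)) = (tau u * psi (u + a * unit_inv u)) * psi ((u - a * unit_inv u) * x)"
      if x: "x \<in> I" for x
    proof -
      have xM: "x \<in> max_ideal" using x I(2) by blast
      have xx: "x * x = 0" using ann x xM by blast
      have ux: "1 + x \<in> units" by (rule unit_plus_max[OF loc one_units xM])
      have uu: "u * unit_inv u = 1" by (rule unit_inv_mult[OF u])
      have "(u * (1 + x)) * (unit_inv u * (1 - x)) = (u * unit_inv u) * (1 - x * x)"
        by (simp add: algebra_simps)
      also have "\<dots> = 1" using uu xx by simp
      finally have inv: "unit_inv (u * (1 + x)) = unit_inv u * (1 - x)" by (rule unit_inv_eq)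
      have "tau (u * (1 + x)) = tau u * tau (1 + x)"
        using tau u ux unfolding mult_char_def by blast
      then have t: "tau (u * (1 + x)) = tau u" using tauI x by simp
      have "u * (1 + x) + a * unit_inv (u * (1 + x)) = (u + a * unit_inv u) + (u - a * unit_inv u) * x"
        unfolding inv by (simp add: algebra_simps)
      moreover have "psi ((u + a * unit_inv u) + (u - a * unit_inv u) * x) =
          psi (u + a * unit_inv u) * psi ((u - a * unit_inv u) * x)"
        using addc unfolding add_char_def by blast
      ultimately have p: "psi (u * (1 + x) + a * unit_inv (u * (1 + x))) =
          psi (u + a * unit_inv u) * psi ((u - a * unit_inv u) * x)" by simp
      show ?thesis unfolding f_def t p by simp
    qed
    have "(\<Sum>x\<in>I. f (u * (1 + x))) =
        (\<Sum>x\<in>I. (tau u * psi (u + a * unit_inv u)) * psi ((u - a * unit_inv u) * x))"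
      by (rule sum.cong) (simp_all add: eq)
    also have "\<dots> = (tau u * psi (u + a * unit_inv u)) * (\<Sum>x\<in>I. psi ((u - a * unit_inv u) * x))"
      by (simp add: sum_distrib_left)
    also have "\<dots> = 0" using sumI b u by simp
    finally show ?thesis .
  qed
  have shift: "sum f units = (\<Sum>u\<in>units. f (u * (1 + x)))" if x: "x \<in> I" for x
  proof -
    have xM: "x \<in> max_ideal" using x I(2) by blast
    have ux: "1 + x \<in> units" by (rule unit_plus_max[OF loc one_units xM])
    show ?thesis using sum.reindex_bij_betw[OF bij_units_mult[OF ux], of f] by simp
  qed
  have "of_nat (card I) * sum f units = (\<Sum>x\<in>I. sum f units)" by simp
  also have "\<dots> = (\<Sum>x\<in>I. \<Sum>u\<in>units. f (u * (1 + x)))" by (rule sum.cong) (simp_all add: shift)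
  also have "\<dots> = (\<Sum>u\<in>units. \<Sum>x\<in>I. f (u * (1 + x)))" by (rule sum.swap)
  also have "\<dots> = 0" by (simp add: inner)
  finally have "of_nat (card I) * sum f units = 0" .
  moreover have "card I \<noteq> 0"
  proof
    assume "card I = 0"
    then have "I = {}" by simp
    then show False using ideal_zero[OF I(1)] by blast
  qed
  ultimately show ?thesis unfolding K by simp
qed




lemma pow_in_max:
  assumes loc: "local_ring TYPE('a::{comm_ring_1,finite})" and m: "(m::'a) \<in> max_ideal" and k: "k > 0"
  shows "m ^ k \<in> max_ideal"
proof -
  obtain j where "k = Suc j" using k by (cases k) auto
  then have "m ^ k = m ^ j * m" by (simp add: mult.commute)
  then show ?thesis using ideal_mult[OF max_ideal_is_ideal[OF loc] m, of "m ^ j"] by simp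
qed

lemma nilpotent:
  assumes loc: "local_ring TYPE('a::{comm_ring_1,finite})" and m: "(m::'a) \<in> max_ideal"
  shows "\<exists>k. m ^ k = 0"
proof -
  have lt: "m ^ i = 0" if ij: "i < j" "m ^ i = m ^ j" for i j
  proof -
    define d where "d = j - i"
    have d: "d > 0" "j = i + d" using ij unfolding d_def by auto
    have md: "m ^ d \<in> max_ideal" by (rule pow_in_max[OF loc m d(1)])
    have "- (m ^ d) \<in> max_ideal" by (rule ideal_uminus[OF max_ideal_is_ideal[OF loc] md])
    then have un: "1 + - (m ^ d) \<in> units" by (rule unit_plus_max[OF loc one_units])
    have "m ^ i * (1 + - (m ^ d)) = m ^ i - m ^ j" unfolding d(2) power_add
      by (simp add: algebra_simps)
    also have "\<dots> = 0" using ij by simp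
    finally have z: "m ^ i * (1 + - (m ^ d)) = 0" .
    have "m ^ i = m ^ i * ((1 + - (m ^ d)) * unit_inv (1 + - (m ^ d)))"
      using unit_inv_mult[OF un] by simp
    also have "\<dots> = (m ^ i * (1 + - (m ^ d))) * unit_inv (1 + - (m ^ d))"
      by (simp only: mult.assoc)
    also have "\<dots> = 0" using z by simp
    finally show ?thesis .
  qed
  have "\<not> inj (\<lambda>i::nat. m ^ i)"
  proof
    assume "inj (\<lambda>i::nat. m ^ i)"
    then have "finite (UNIV :: nat set)"
      using finite_imageD[of "\<lambda>i::nat. m ^ i" UNIV] by simp
    then show False by simp
  qed
  then obtain i j where "i \<noteq> j" "m ^ i = m ^ j" unfolding inj_def by blast
  then show ?thesis
  proof (cases "i < j")
    case True then show ?thesis using lt \<open>m ^ i = m ^ j\<close> by blast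
  next
    case False then have "j < i" using \<open>i \<noteq> j\<close> by simp
    then show ?thesis using lt \<open>m ^ i = m ^ j\<close> by metis
  qed
qed

lemma hensel:
  assumes loc: "local_ring TYPE('a::{comm_ring_1,finite})"
    and two: "(2::'a) \<in> units" and a: "(a::'a) \<in> units" and u: "u \<in> units"
    and e: "u * u - a \<in> max_ideal"
  shows "a \<in> unit_squares"
proof -
  define e where "e = u * u - a"
  have eM: "e \<in> max_ideal" using e unfolding e_def .
  have MI: "is_ideal (max_ideal::'a set)" by (rule max_ideal_is_ideal[OF loc])
  have step: "\<exists>v c. v \<in> units \<and> v * v - a = e ^ (2 ^ n) * c" for n
  proof (induction n)
    case 0
    show ?case by (rule exI[of _ u], rule exI[of _ 1]) (simp add: u e_def)
  next
    case (Suc n)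
    then obtain v c where v: "v \<in> units" and vc: "v * v - a = e ^ (2 ^ n) * c" by blast
    define E where "E = e ^ (2 ^ n) * c"
    have tv: "2 * v \<in> units" by (rule units_mult[OF two v])
    define w where "w = unit_inv (2 * v)"
    have vw: "2 * v * w = 1" unfolding w_def by (rule unit_inv_mult[OF tv])
    define v' where "v' = v - E * w"
    have id: "v' * v' - a = (v * v - a) - (2 * v * w) * E + E * E * (w * w)"
      unfolding v'_def by (simp add: algebra_simps mult_2)
    also have "\<dots> = E * E * (w * w)" using vw vc unfolding E_def by simp
    also have "E * E = e ^ (2 ^ Suc n) * (c * c)" unfolding E_def
      by (simp add: power_add[symmetric] mult_2 algebra_simps)
    finally have eq: "v' * v' - a = e ^ (2 ^ Suc n) * (c * c * (w * w))" by (simp add: mult.assoc)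
    have "e ^ (2 ^ Suc n) \<in> max_ideal" by (rule pow_in_max[OF loc eM]) simp
    then have "(c * c * (w * w)) * e ^ (2 ^ Suc n) \<in> max_ideal" by (rule ideal_mult[OF MI])
    then have "a + e ^ (2 ^ Suc n) * (c * c * (w * w)) \<in> units"
      using unit_plus_max[OF loc a] by (simp add: mult.commute)
    moreover have "v' * v' = a + e ^ (2 ^ Suc n) * (c * c * (w * w))" using eq by (simp add: algebra_simps)
    ultimately have "v' * v' \<in> units" by simp
    then have "v' \<in> units" by (rule units_multD)
    then show ?case using eq by blast
  qed
  obtain k where k: "e ^ k = 0" using nilpotent[OF loc eM] by blast
  obtain v c where v: "v \<in> units" and vc: "v * v - a = e ^ (2 ^ k) * c" using step by blast
  have "e ^ (2 ^ k) = e ^ k * e ^ (2 ^ k - k)"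
    by (simp add: power_add[symmetric] less_imp_le)
  then have "v * v = a" using vc k by simp
  then show ?thesis unfolding unit_squares_def using v by blast
qed

lemma two_unit:
  assumes loc: "local_ring TYPE('a::{comm_ring_1,finite})"
    and odd: "odd (residue_char TYPE('a))"
  shows "(2::'a) \<in> units"
proof (rule ccontr)
  assume "(2::'a) \<notin> units"
  then have t: "(of_nat 2::'a) \<in> max_ideal" using nonunit_in_max[OF loc] by simp
  let ?P = "\<lambda>n. n > 0 \<and> (of_nat n :: 'a) \<in> max_ideal"
  have P2: "?P 2" using t by simp
  have le: "(LEAST n. ?P n) \<le> 2" using Least_le[of ?P 2] P2 by blast
  have PL: "?P (LEAST n. ?P n)" using LeastI[of ?P 2] P2 by blast
  have "(LEAST n. ?P n) \<noteq> 1" using PL unit_notin_max[OF loc one_units] by auto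
  then have "(LEAST n. ?P n) = 2" using le PL by linarith
  then have "residue_char TYPE('a) = 2" unfolding residue_char_def by simp
  then show False using odd by simp
qed

lemma max_nonzero:
  assumes loc: "local_ring TYPE('a::{comm_ring_1,finite})"
    and nf: "\<not> is_field_ring TYPE('a)"
  shows "\<exists>x::'a. x \<noteq> 0 \<and> x \<in> max_ideal"
proof -
  have "(0::'a) \<noteq> 1"
  proof
    assume h: "(0::'a) = 1"
    have "\<forall>x::'a. x \<in> max_ideal"
    proof
      fix x :: 'a
      have "x = x * 1" by simp
      also have "\<dots> = 0" using h[symmetric] by simp
      finally show "x \<in> max_ideal" using ideal_zero[OF max_ideal_is_ideal[OF loc]] by simp
    qed
    then show False using max_ideal_ok[OF loc] unfolding is_maximal_ideal_def by blast
  qed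
  then obtain x :: 'a where "x \<noteq> 0" "\<not> x dvd 1" using nf unfolding is_field_ring_def by blast
  then show ?thesis using nonunit_in_max[OF loc, of x] unfolding units_def by auto
qed




lemma conductor_eq:
  fixes tau :: "'a::{comm_ring_1,finite} \<Rightarrow> complex"
  assumes loc: "local_ring TYPE('a)" and tau: "mult_char tau" and nt: "\<not> trivial_mult_char tau"
  shows "conductor tau = {x \<in> max_ideal. \<forall>r. tau (1 + r * x) = 1}
    \<and> is_ideal {x \<in> max_ideal. \<forall>r. tau (1 + r * x) = 1}"
proof -
  define G where "G = {x \<in> max_ideal. \<forall>r. tau (1 + r * x) = 1}"
  have MI: "is_ideal (max_ideal::'a set)" by (rule max_ideal_is_ideal[OF loc])
  have GI: "is_ideal G" unfolding is_ideal_def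
  proof (intro conjI ballI allI)
    show "0 \<in> G" unfolding G_def using ideal_zero[OF MI] tau_one[OF tau] by simp
  next
    fix x y assume x: "x \<in> G" and y: "y \<in> G"
    have xM: "x \<in> max_ideal" and yM: "y \<in> max_ideal" using x y unfolding G_def by auto
    have "\<forall>r. tau (1 + r * (x + y)) = 1"
    proof
      fix r
      define p where "p = 1 + r * x"
      have pu: "p \<in> units" unfolding p_def
        by (rule unit_plus_max[OF loc one_units ideal_mult[OF MI xM]])
      define q where "q = unit_inv p"
      have pq: "p * q = 1" unfolding q_def by (rule unit_inv_mult[OF pu])
      have su: "1 + (r * q) * y \<in> units"
        by (rule unit_plus_max[OF loc one_units ideal_mult[OF MI yM]])
      have "p * (1 + (r * q) * y) = p + (p * q) * r * y" by (simp add: algebra_simps)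
      also have "\<dots> = 1 + r * (x + y)" using pq unfolding p_def by (simp add: algebra_simps)
      finally have eq: "1 + r * (x + y) = p * (1 + (r * q) * y)" by simp
      have "tau (p * (1 + (r * q) * y)) = tau p * tau (1 + (r * q) * y)"
        using tau pu su unfolding mult_char_def by blast
      moreover have "tau p = 1" using x unfolding G_def p_def by blast
      moreover have "tau (1 + (r * q) * y) = 1" using y unfolding G_def by blast
      ultimately show "tau (1 + r * (x + y)) = 1" using eq by simp
    qed
    then show "x + y \<in> G" unfolding G_def using ideal_add[OF MI xM yM] by blast
  next
    fix s x assume x: "x \<in> G"
    have xM: "x \<in> max_ideal" using x unfolding G_def by auto
    have "\<forall>r. tau (1 + r * (s * x)) = 1"
    proof
      fix r
      have "tau (1 + (r * s) * x) = 1" using x unfolding G_def by blast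
      then show "tau (1 + r * (s * x)) = 1" by (simp add: mult.assoc)
    qed
    then show "s * x \<in> G" unfolding G_def using ideal_mult[OF MI xM] by blast
  qed
  have PG: "is_ideal G \<and> G \<subseteq> max_ideal \<and> (\<forall>x\<in>G. tau (1 + x) = 1)"
  proof (intro conjI)
    show "is_ideal G" by (rule GI)
    show "G \<subseteq> max_ideal" unfolding G_def by blast
    show "\<forall>x\<in>G. tau (1 + x) = 1"
    proof
      fix x assume "x \<in> G"
      then have "tau (1 + 1 * x) = 1" unfolding G_def by blast
      then show "tau (1 + x) = 1" by simp
    qed
  qed
  have "(GREATEST I. is_ideal I \<and> I \<subseteq> max_ideal \<and> (\<forall>x\<in>I. tau (1 + x) = 1)) = G"
  proof (rule Greatest_equality)
    show "is_ideal G \<and> G \<subseteq> max_ideal \<and> (\<forall>x\<in>G. tau (1 + x) = 1)" by (rule PG)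
    fix I assume I: "is_ideal I \<and> I \<subseteq> max_ideal \<and> (\<forall>x\<in>I. tau (1 + x) = 1)"
    show "I \<le> G"
    proof
      fix x assume x: "x \<in> I"
      have "\<forall>r. tau (1 + r * x) = 1" using I ideal_mult[of I x] x by blast
      then show "x \<in> G" unfolding G_def using I x by blast
    qed
  qed
  then show ?thesis using nt GI unfolding conductor_def G_def by simp
qed

lemma minimal_ideal:
  fixes C :: "'a::{comm_ring_1,finite} set"
  assumes loc: "local_ring TYPE('a)" and C: "is_ideal C" "C \<subseteq> max_ideal" "C \<noteq> {0}"
  shows "\<exists>I. is_ideal I \<and> I \<subseteq> C \<and> I \<noteq> {0} \<and> (\<forall>x\<in>I. \<forall>m\<in>max_ideal. x * m = 0)"
proof -
  have MI: "is_ideal (max_ideal::'a set)" by (rule max_ideal_is_ideal[OF loc])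
  obtain c where c: "c \<in> C" "c \<noteq> 0" using C(1,3) ideal_zero[OF C(1)] by blast
  have "\<exists>x. (x \<in> C \<and> x \<noteq> 0) \<and> (\<forall>y. (y \<in> C \<and> y \<noteq> 0) \<longrightarrow>
      card (range (\<lambda>r. r * x)) \<le> card (range (\<lambda>r. r * y)))"
    by (rule ex_has_least_nat[of "\<lambda>x. x \<in> C \<and> x \<noteq> 0" c]) (use c in blast)
  then obtain x0 where x0: "x0 \<in> C" "x0 \<noteq> 0"
    and least: "\<forall>y. (y \<in> C \<and> y \<noteq> 0) \<longrightarrow> card (range (\<lambda>r. r * x0)) \<le> card (range (\<lambda>r. r * y))"
    by blast
  define I where "I = range (\<lambda>r. r * x0)"
  have II: "is_ideal I" unfolding I_def is_ideal_def
  proof (intro conjI ballI allI)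
    show "0 \<in> range (\<lambda>r. r * x0)" by (rule range_eqI[where x=0]) simp
    fix y z assume "y \<in> range (\<lambda>r. r * x0)" "z \<in> range (\<lambda>r. r * x0)"
    then obtain r s where "y = r * x0" "z = s * x0" by blast
    then have "y + z = (r + s) * x0" by (simp add: distrib_right)
    then show "y + z \<in> range (\<lambda>r. r * x0)" by blast
  next
    fix t y assume "y \<in> range (\<lambda>r. r * x0)"
    then obtain r where "y = r * x0" by blast
    then have "t * y = (t * r) * x0" by (simp add: mult.assoc)
    then show "t * y \<in> range (\<lambda>r. r * x0)" by blast
  qed
  have IC: "I \<subseteq> C" unfolding I_def using ideal_mult[OF C(1) x0(1)] by blast
  have x0I: "x0 \<in> I" unfolding I_def by (rule range_eqI[where x=1]) simp
  have ann0: "x0 * m = 0" if m: "m \<in> max_ideal" for m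
  proof (rule ccontr)
    assume ne: "x0 * m \<noteq> 0"
    define x1 where "x1 = m * x0"
    have x1: "x1 \<in> C" "x1 \<noteq> 0" unfolding x1_def using ideal_mult[OF C(1) x0(1)] ne
      by (auto simp: mult.commute)
    have sub: "range (\<lambda>r. r * x1) \<subseteq> range (\<lambda>r. r * x0)"
    proof
      fix y assume "y \<in> range (\<lambda>r. r * x1)"
      then obtain r where "y = r * x1" by blast
      then have "y = (r * m) * x0" unfolding x1_def by (simp add: mult.assoc)
      then show "y \<in> range (\<lambda>r. r * x0)" by blast
    qed
    have notin: "x0 \<notin> range (\<lambda>r. r * x1)"
    proof
      assume "x0 \<in> range (\<lambda>r. r * x1)"
      then obtain r where r: "x0 = r * x1" by blast
      have "- (r * m) \<in> max_ideal" by (rule ideal_uminus[OF MI ideal_mult[OF MI m]])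
      then have un: "1 + - (r * m) \<in> units" by (rule unit_plus_max[OF loc one_units])
      have z: "x0 * (1 + - (r * m)) = 0" using r unfolding x1_def by (simp add: algebra_simps)
      have "x0 = x0 * ((1 + - (r * m)) * unit_inv (1 + - (r * m)))"
        using unit_inv_mult[OF un] by simp
      also have "\<dots> = (x0 * (1 + - (r * m))) * unit_inv (1 + - (r * m))"
        by (simp only: mult.assoc)
      also have "\<dots> = 0" using z by simp
      finally show False using x0(2) by simp
    qed
    have "range (\<lambda>r. r * x1) \<subset> range (\<lambda>r. r * x0)" using sub notin x0I unfolding I_def by blast
    then have "card (range (\<lambda>r. r * x1)) < card (range (\<lambda>r. r * x0))"
      by (rule psubset_card_mono[OF finite])
    moreover have "card (range (\<lambda>r. r * x0)) \<le> card (range (\<lambda>r. r * x1))" using least x1 by blast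
    ultimately show False by simp
  qed
  have ann: "\<forall>x\<in>I. \<forall>m\<in>(max_ideal::'a set). x * m = 0"
  proof (intro ballI)
    fix x and m :: 'a assume "x \<in> I" "m \<in> max_ideal"
    then obtain r where "x = r * x0" unfolding I_def by blast
    then have "x * m = r * (x0 * m)" by (simp add: mult.assoc)
    then show "x * m = 0" using ann0[OF \<open>m \<in> max_ideal\<close>] by simp
  qed
  have "I \<noteq> {0}" using x0I x0(2) by blast
  then show ?thesis using II IC ann by blast
qed




theorem mainTheorem3:
  fixes psi tau :: "'a::{comm_ring_1, finite} \<Rightarrow> complex"
  assumes "local_ring TYPE('a)"
    and "\<not> is_field_ring TYPE('a)"
    and "primitive_add_char psi"
    and "mult_char tau"
    and "\<not> primitive_mult_char tau"
  shows "(\<forall>a. a \<notin> units \<longrightarrow> kloosterman psi tau a = 0) \<and>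
         (odd (residue_char TYPE('a)) \<longrightarrow>
            (\<forall>a. a \<notin> unit_squares \<longrightarrow> kloosterman psi tau a = 0))"
proof -
  note loc = assms(1) and psi = assms(3) and tau = assms(4)
  have MI: "is_ideal (max_ideal::'a set)" by (rule max_ideal_is_ideal[OF loc])
  have "\<exists>C::'a set. is_ideal C \<and> C \<subseteq> max_ideal \<and> C \<noteq> {0} \<and> (\<forall>x\<in>C. tau (1 + x) = 1)"
  proof (cases "trivial_mult_char tau")
    case True
    have "\<forall>x\<in>(max_ideal::'a set). tau (1 + x) = 1"
    proof
      fix x :: 'a assume "x \<in> max_ideal"
      then have "1 + x \<in> units" by (rule unit_plus_max[OF loc one_units])
      then show "tau (1 + x) = 1" using True unfolding trivial_mult_char_def by blast
    qed
    moreover have "(max_ideal::'a set) \<noteq> {0}" using max_nonzero[OF loc assms(2)] by blast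
    ultimately show ?thesis using MI by blast
  next
    case False
    define G where "G = {x::'a \<in> max_ideal. \<forall>r. tau (1 + r * x) = 1}"
    have G: "conductor tau = G" "is_ideal G" using conductor_eq[OF loc tau False] unfolding G_def by auto
    have "G \<noteq> {0}" using assms(5) G(1) unfolding primitive_mult_char_def by simp
    moreover have "G \<subseteq> max_ideal" unfolding G_def by blast
    moreover have "\<forall>x\<in>G. tau (1 + x) = 1"
    proof
      fix x assume "x \<in> G"
      then have "tau (1 + 1 * x) = 1" unfolding G_def by blast
      then show "tau (1 + x) = 1" by simp
    qed
    ultimately show ?thesis using G(2) by blast
  qed
  then obtain C :: "'a set" where C: "is_ideal C" "C \<subseteq> max_ideal" "C \<noteq> {0}"
    and tauC: "\<forall>x\<in>C. tau (1 + x) = 1" by blast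
  obtain I where I: "is_ideal I" "I \<subseteq> C" "I \<noteq> {0}"
    and ann: "\<forall>x\<in>I. \<forall>m\<in>(max_ideal::'a set). x * m = 0"
    using minimal_ideal[OF loc C] by blast
  have IM: "I \<subseteq> max_ideal" using I(2) C(2) by blast
  have tauI: "\<forall>x\<in>I. tau (1 + x) = 1" using I(2) tauC by blast
  have K: "kloosterman psi tau a = 0" if b: "\<forall>u\<in>units. u - a * unit_inv u \<in> units" for a
    by (rule core[OF loc I(1) IM I(3) ann tauI psi tau b])
  have part1: "kloosterman psi tau a = 0" if a: "a \<notin> units" for a
  proof (rule K, intro ballI)
    fix u :: 'a assume u: "u \<in> units"
    have aM: "a \<in> max_ideal" by (rule nonunit_in_max[OF loc a])
    have "unit_inv u * a \<in> max_ideal" by (rule ideal_mult[OF MI aM])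
    then have "- (a * unit_inv u) \<in> max_ideal" using ideal_uminus[OF MI] by (simp add: mult.commute)
    then have "u + - (a * unit_inv u) \<in> units" by (rule unit_plus_max[OF loc u])
    then show "u - a * unit_inv u \<in> units" by simp
  qed
  have part2: "kloosterman psi tau a = 0"
    if odd: "odd (residue_char TYPE('a))" and a: "a \<notin> unit_squares" for a
  proof (cases "a \<in> units")
    case False then show ?thesis by (rule part1)
  next
    case True
    have two: "(2::'a) \<in> units" by (rule two_unit[OF loc odd])
    show ?thesis
    proof (rule K, intro ballI)
      fix u :: 'a assume u: "u \<in> units"
      show "u - a * unit_inv u \<in> units"
      proof (rule ccontr)
        assume "u - a * unit_inv u \<notin> units"
        then have "u - a * unit_inv u \<in> max_ideal" by (rule nonunit_in_max[OF loc])
        then have "u * (u - a * unit_inv u) \<in> max_ideal" by (rule ideal_mult[OF MI])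
        moreover have "u * (u - a * unit_inv u) = u * u - a * (u * unit_inv u)"
          by (simp add: algebra_simps)
        ultimately have "u * u - a \<in> max_ideal" using unit_inv_mult[OF u] by simp
        then have "a \<in> unit_squares" by (rule hensel[OF loc two True u])
        then show False using a by simp
      qed
    qed
  qed
  show ?thesis using part1 part2 by blast
qed


end
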